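(* Let $\Lambda$ be a well-rounded lattice of rank $9$ in a $9$-dimensional Euclidean space $E$, and suppose there is an $8$-dimensional subspace $F\subset E$ such that $\Lambda\cap F$ is similar to the root lattice $\mathsf E_8$ and $\min(\Lambda\cap F)=\min\Lambda$. Then there is no lattice $L\subset E$ with $\min L=\min\Lambda$ and $\Lambda\subsetneq L$.
   Context: For a lattice $\Lambda$, $\min\Lambda=\min_{x\in\Lambda\setminus\{0\}}x\cdot x$; its minimal vectors are those attaining this minimum; $\Lambda$ is well-rounded if its minimal vectors span the ambient space. $\mathsf E_8=\mathsf D_8\cup(\tfrac12(1,\dots,1)+\mathsf D_8)$ where $\mathsf D_8=\{x\in\mathbb Z^8:\sum x_i \text{ even}\}$. *)

theory Defs
  imports "HOL-Analysis.Analysis"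
begin

definition zspan :: "'a::real_vector set \<Rightarrow> 'a set" where
  "zspan B = {\<Sum>b\<in>B. of_int (c b) *\<^sub>R b | c. True}"

definition lattice_of_rank :: "'a::real_vector set \<Rightarrow> nat \<Rightarrow> bool" where
  "lattice_of_rank L r \<longleftrightarrow> (\<exists>B. finite B \<and> independent B \<and> card B = r \<and> L = zspan B)"

definition lattice :: "'a::real_vector set \<Rightarrow> bool" where
  "lattice L \<longleftrightarrow> (\<exists>r. lattice_of_rank L r)"

definition lattice_min :: "'a::real_inner set \<Rightarrow> real" where
  "lattice_min L = Inf {x \<bullet> x | x. x \<in> L \<and> x \<noteq> 0}"

definition min_vectors :: "'a::real_inner set \<Rightarrow> 'a set" where
  "min_vectors L = {x \<in> L. x \<noteq> 0 \<and> x \<bullet> x = lattice_min L}"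

definition well_rounded :: "'a::euclidean_space set \<Rightarrow> bool" where
  "well_rounded L \<longleftrightarrow> span (min_vectors L) = UNIV"

definition D8 :: "(real ^ 8) set" where
  "D8 = {x. (\<forall>i. x $ i \<in> \<int>) \<and> (\<exists>k::int. (\<Sum>i\<in>UNIV. x $ i) = 2 * of_int k)}"

definition E8 :: "(real ^ 8) set" where
  "E8 = D8 \<union> {(\<chi> i. 1/2) + x | x. x \<in> D8}"

definition similar_to_E8 :: "'a::euclidean_space set \<Rightarrow> bool" where
  "similar_to_E8 S \<longleftrightarrow> (\<exists>f :: real ^ 8 \<Rightarrow> 'a. linear f \<and>
      (\<exists>c>0. \<forall>x. norm (f x) = c * norm x) \<and> f ` E8 = S)"

end

theory Submission
  imports Defs
begin

lemma real_key:
  fixes m M S D :: real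
  assumes "0 \<le> m" "m \<le> M" "M \<le> 1/2" "S \<le> (m+M)*D - 8*m*M"
  shows "S \<le> 2*M \<or> S \<le> D - 1 - 2*m"
proof (rule ccontr)
  assume "\<not> ?thesis"
  hence A: "(m+M)*D > 2*M + 8*m*M" and B: "(1-m-M)*D < 1 + 2*m - 8*m*M"
    using assms(4) by (auto simp: algebra_simps)
  show False
  proof (cases "1 - m - M = 0")
    case True
    have hm: "m = 1/2" and hM: "M = 1/2" using assms True by auto
    have "1 + 2*m - 8*m*M = 0" unfolding hm hM by simp
    thus False using B True by simp
  next
    case False
    hence pos: "1 - m - M > 0" using assms by auto
    have "(1-m-M)*((m+M)*D) > (1-m-M)*(2*M + 8*m*M)"
      using A pos by (simp add: mult_strict_left_mono)
    moreover have "(m+M)*((1-m-M)*D) \<le> (m+M)*(1 + 2*m - 8*m*M)"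
      using B assms by (intro mult_left_mono) auto
    moreover have "(M-m)*(1-2*(M-m)) \<ge> 0" using assms by (intro mult_nonneg_nonneg) auto
    ultimately show False by (simp add: algebra_simps)
  qed
qed

lemma sum8: "(\<Sum>i\<in>(UNIV::8 set). (c::real)) = 8 * c" by simp

lemma delta_bound:
  fixes \<delta> :: "8 \<Rightarrow> real"
  assumes "\<And>i. 0 \<le> \<delta> i" "\<And>i. \<delta> i \<le> 1/2" "\<And>i. \<delta> i \<le> \<delta> j" "\<And>i. \<delta> k \<le> \<delta> i"
  shows "(\<Sum>i\<in>UNIV. \<delta> i ^ 2) + 1 - 2 * \<delta> j \<le> 1 \<or> (\<Sum>i\<in>UNIV. (1/2 - \<delta> i) ^ 2) + 2 * \<delta> k \<le> 1"
proof -
  define S where "S = (\<Sum>i\<in>UNIV. \<delta> i ^ 2)"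
  define D where "D = (\<Sum>i\<in>UNIV. \<delta> i)"
  have "0 \<le> (\<Sum>i\<in>UNIV. (\<delta> i - \<delta> k) * (\<delta> j - \<delta> i))"
    using assms by (intro sum_nonneg mult_nonneg_nonneg) auto
  also have "\<dots> = (\<Sum>i\<in>UNIV. (\<delta> k + \<delta> j) * \<delta> i - \<delta> i ^ 2 - \<delta> k * \<delta> j)"
    by (intro sum.cong) (auto simp: algebra_simps power2_eq_square)
  also have "\<dots> = (\<delta> k + \<delta> j) * D - S - 8 * (\<delta> k * \<delta> j)"
    by (simp add: sum_subtractf sum_distrib_left S_def D_def)
  finally have 1: "S \<le> (\<delta> k + \<delta> j) * D - 8 * \<delta> k * \<delta> j" by simp
  have T: "(\<Sum>i\<in>UNIV. (1/2 - \<delta> i) ^ 2) = 2 - D + S"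
  proof -
    have "(\<Sum>i\<in>UNIV. (1/2 - \<delta> i) ^ 2) = (\<Sum>i\<in>UNIV. 1/4 - \<delta> i + \<delta> i ^ 2)"
      by (intro sum.cong) (auto simp: algebra_simps power2_eq_square)
    also have "\<dots> = 2 - D + S" by (simp add: sum.distrib sum_subtractf S_def D_def)
    finally show ?thesis .
  qed
  have "S \<le> 2 * \<delta> j \<or> S \<le> D - 1 - 2 * \<delta> k"
    using real_key[OF assms(1)[of k] assms(4)[of j] assms(2)[of j] 1] .
  thus ?thesis unfolding T S_def[symmetric] by auto
qed

lemma E8_cover:
  fixes z :: "real^8"
  shows "\<exists>e\<in>E8. (z - e) \<bullet> (z - e) \<le> 1"
proof -
  define g where "g i = round (z$i)" for i
  define r where "r i = z$i - of_int (g i)" for i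
  define \<delta> where "\<delta> i = \<bar>r i\<bar>" for i
  define s :: "8 \<Rightarrow> int" where "s i = (if r i \<ge> 0 then 1 else -1)" for i
  define t :: "8 \<Rightarrow> int" where "t i = (if r i \<ge> 0 then 0 else -1)" for i
  have d0: "0 \<le> \<delta> i" for i by (simp add: \<delta>_def)
  have d1: "\<delta> i \<le> 1/2" for i
    using of_int_round_abs_le[of "z$i"] by (simp add: \<delta>_def r_def g_def abs_minus_commute)
  obtain j where j: "\<And>i. \<delta> i \<le> \<delta> j"
  proof -
    have "Max (range \<delta>) \<in> range \<delta>" by (intro Max_in) auto
    then obtain j where "\<delta> j = Max (range \<delta>)" by (metis rangeE)
    moreover have "\<delta> i \<le> Max (range \<delta>)" for i by (intro Max_ge) auto
    ultimately show ?thesis using that by metis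
  qed
  obtain k where k: "\<And>i. \<delta> k \<le> \<delta> i"
  proof -
    have "Min (range \<delta>) \<in> range \<delta>" by (intro Min_in) auto
    then obtain k where "\<delta> k = Min (range \<delta>)" by (metis rangeE)
    moreover have "Min (range \<delta>) \<le> \<delta> i" for i by (intro Min_le) auto
    ultimately show ?thesis using that by metis
  qed
  define a :: int where "a = (if odd (\<Sum>i\<in>UNIV. g i) then s j else 0)"
  define G1 where "G1 i = g i + (if i = j then a else 0)" for i
  have sG1: "(\<Sum>i\<in>UNIV. G1 i) = (\<Sum>i\<in>UNIV. g i) + a"
    by (simp add: G1_def sum.distrib)
  have evG1: "even (\<Sum>i\<in>UNIV. G1 i)"
    unfolding sG1 a_def s_def by auto
  define c1 :: "real^8" where "c1 = (\<chi> i. of_int (G1 i))"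
  have c1D8: "c1 \<in> D8"
  proof -
    obtain q where q: "(\<Sum>i\<in>UNIV. G1 i) = 2 * q" using evG1 by (auto elim: evenE)
    have "(\<Sum>i\<in>UNIV. c1 $ i) = of_int (\<Sum>i\<in>UNIV. G1 i)" by (simp add: c1_def)
    also have "\<dots> = 2 * of_int q" by (simp add: q)
    finally show ?thesis unfolding D8_def by (auto simp: c1_def)
  qed
  have P1: "(z - c1) \<bullet> (z - c1) \<le> (\<Sum>i\<in>UNIV. \<delta> i ^ 2) + 1 - 2 * \<delta> j"
  proof -
    have "(z - c1) \<bullet> (z - c1) = (\<Sum>i\<in>UNIV. (r i - of_int (if i = j then a else 0)) ^ 2)"
      by (simp add: inner_vec_def c1_def G1_def r_def power2_eq_square algebra_simps)
    also have "\<dots> \<le> (\<Sum>i\<in>UNIV. \<delta> i ^ 2 + (if i = j then 1 - 2 * \<delta> j else 0))"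
    proof (intro sum_mono)
      fix i
      show "(r i - of_int (if i = j then a else 0)) ^ 2 \<le> \<delta> i ^ 2 + (if i = j then 1 - 2 * \<delta> j else 0)"
        using d1[of j] by (auto simp: a_def s_def \<delta>_def power2_eq_square algebra_simps abs_if)
    qed
    also have "\<dots> = (\<Sum>i\<in>UNIV. \<delta> i ^ 2) + 1 - 2 * \<delta> j"
      by (simp add: sum.distrib)
    finally show ?thesis .
  qed
  define b :: int where "b = (if odd (\<Sum>i\<in>UNIV. g i + t i) then s k else 0)"
  define G2 where "G2 i = g i + t i - (if i = k then b else 0)" for i
  have sG2: "(\<Sum>i\<in>UNIV. G2 i) = (\<Sum>i\<in>UNIV. g i + t i) - b"
    by (simp add: G2_def sum_subtractf)
  have evG2: "even (\<Sum>i\<in>UNIV. G2 i)"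
    unfolding sG2 b_def s_def by auto
  define d2 :: "real^8" where "d2 = (\<chi> i. of_int (G2 i))"
  have d2D8: "d2 \<in> D8"
  proof -
    obtain q where q: "(\<Sum>i\<in>UNIV. G2 i) = 2 * q" using evG2 by (auto elim: evenE)
    have "(\<Sum>i\<in>UNIV. d2 $ i) = of_int (\<Sum>i\<in>UNIV. G2 i)" by (simp add: d2_def)
    also have "\<dots> = 2 * of_int q" by (simp add: q)
    finally show ?thesis unfolding D8_def by (auto simp: d2_def)
  qed
  define c2 :: "real^8" where "c2 = (\<chi> i. 1/2) + d2"
  have c2E8: "c2 \<in> E8" unfolding E8_def c2_def using d2D8 by blast
  have P2: "(z - c2) \<bullet> (z - c2) \<le> (\<Sum>i\<in>UNIV. (1/2 - \<delta> i) ^ 2) + 2 * \<delta> k"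
  proof -
    have "(z - c2) \<bullet> (z - c2) = (\<Sum>i\<in>UNIV. (r i - of_int (t i) - 1/2 + of_int (if i = k then b else 0)) ^ 2)"
      by (simp add: inner_vec_def c2_def d2_def G2_def r_def power2_eq_square algebra_simps)
    also have "\<dots> \<le> (\<Sum>i\<in>UNIV. (1/2 - \<delta> i) ^ 2 + (if i = k then 2 * \<delta> k else 0))"
    proof (intro sum_mono)
      fix i
      show "(r i - of_int (t i) - 1/2 + of_int (if i = k then b else 0)) ^ 2 \<le> (1/2 - \<delta> i) ^ 2 + (if i = k then 2 * \<delta> k else 0)"
        using d1[of k] by (auto simp: b_def s_def t_def \<delta>_def power2_eq_square algebra_simps abs_if)
    qed
    also have "\<dots> = (\<Sum>i\<in>UNIV. (1/2 - \<delta> i) ^ 2) + 2 * \<delta> k"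
      by (simp add: sum.distrib)
    finally show ?thesis .
  qed
  have c1E8: "c1 \<in> E8" unfolding E8_def using c1D8 by blast
  from delta_bound[of \<delta> j k, OF d0 d1 j k] P1 P2 c1E8 c2E8 show ?thesis by force
qed

lemma int_sq_ge_abs: "\<bar>a::int\<bar> \<le> a^2"
proof (cases "a = 0")
  case False
  hence "1 \<le> \<bar>a\<bar>" by linarith
  hence "\<bar>a\<bar> * 1 \<le> \<bar>a\<bar> * \<bar>a\<bar>" by (intro mult_left_mono) auto
  thus ?thesis by (simp add: power2_eq_square)
qed simp

lemma D8_min:
  assumes "x \<in> D8" "x \<noteq> 0"
  shows "x \<bullet> x \<ge> 2"
proof -
  define a where "a i = \<lfloor>x$i\<rfloor>" for i
  have xa: "x$i = of_int (a i)" for i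
    using assms(1) unfolding D8_def a_def by (auto elim!: Ints_cases)
  obtain q where q: "(\<Sum>i\<in>UNIV. x $ i) = 2 * of_int q" using assms(1) unfolding D8_def by auto
  have "of_int (\<Sum>i\<in>UNIV. a i) = (of_int (2*q) :: real)" using q by (simp add: xa)
  hence sa: "(\<Sum>i\<in>UNIV. a i) = 2*q" by linarith
  obtain i0 where "x $ i0 \<noteq> 0" using assms(2) by (metis vec_eq_iff zero_index)
  hence ai0: "a i0 \<noteq> 0" by (simp add: xa)
  have abs_eq: "(\<Sum>i\<in>UNIV. \<bar>a i\<bar>) = (\<Sum>i\<in>UNIV. a i) + 2 * (\<Sum>i\<in>UNIV. max (- a i) 0)"
    by (simp add: sum.distrib[symmetric] sum_distrib_left) (intro sum.cong, auto)
  have pos: "(\<Sum>i\<in>UNIV. \<bar>a i\<bar>) > 0"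
  proof -
    have "\<bar>a i0\<bar> \<le> (\<Sum>i\<in>UNIV. \<bar>a i\<bar>)"
      by (rule member_le_sum) auto
    thus ?thesis using ai0 by linarith
  qed
  have ge2: "(\<Sum>i\<in>UNIV. \<bar>a i\<bar>) \<ge> 2" using pos unfolding abs_eq sa by presburger
  have "(\<Sum>i\<in>UNIV. \<bar>a i\<bar>) \<le> (\<Sum>i\<in>UNIV. a i ^ 2)"
    by (intro sum_mono int_sq_ge_abs)
  hence "2 \<le> (\<Sum>i\<in>UNIV. a i ^ 2)" using ge2 by linarith
  hence "(2::real) \<le> of_int (\<Sum>i\<in>UNIV. a i ^ 2)" by linarith
  also have "\<dots> = x \<bullet> x" by (simp add: inner_vec_def xa power2_eq_square)
  finally show ?thesis .
qed

lemma E8_min: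
  assumes "x \<in> E8" "x \<noteq> 0"
  shows "x \<bullet> x \<ge> 2"
proof -
  { fix d assume d: "d \<in> D8" and x: "x = (\<chi> i. 1/2) + d"
    have "(1/4::real) \<le> (x$i)^2" for i
    proof -
      obtain b where b: "d$i = of_int b" using d unfolding D8_def by (auto elim!: Ints_cases)
      have "x$i = 1/2 + of_int b" by (simp add: x b)
      moreover have "(1/4::real) \<le> (1/2 + of_int b)^2"
      proof (cases "b \<ge> 0")
        case True thus ?thesis by (simp add: power2_eq_square algebra_simps)
      next
        case False
        hence "(1/2 + of_int b :: real) \<le> -1/2" by linarith
        hence "(1/2::real) \<le> \<bar>1/2 + of_int b\<bar>" by linarith
        hence "(1/2::real)^2 \<le> \<bar>1/2 + of_int b\<bar>^2" by (intro power_mono) auto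
        thus ?thesis by (simp add: power2_eq_square)
      qed
      ultimately show ?thesis by simp
    qed
    hence "(\<Sum>i\<in>(UNIV::8 set). (1/4::real)) \<le> (\<Sum>i\<in>UNIV. (x$i)^2)" by (intro sum_mono)
    hence ?thesis by (simp add: inner_vec_def power2_eq_square)
  }
  thus ?thesis using assms D8_min unfolding E8_def by blast
qed

lemma span_E8: "span E8 = UNIV"
proof -
  have "axis i 1 \<in> span E8" for i :: 8
  proof -
    have "2 *\<^sub>R axis i (1::real) \<in> D8"
    proof -
      have "(\<Sum>k\<in>UNIV. (2 *\<^sub>R axis i (1::real)) $ k) = 2 * of_int 1"
        by (simp add: axis_def sum_distrib_left[symmetric])
      thus ?thesis unfolding D8_def by (auto simp: axis_def)
    qed
    hence "2 *\<^sub>R axis i (1::real) \<in> span E8" unfolding E8_def by (intro span_base) auto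
    hence "(1/2) *\<^sub>R (2 *\<^sub>R axis i (1::real)) \<in> span E8" by (rule span_mul)
    thus ?thesis by simp
  qed
  hence "Basis \<subseteq> span E8" by (auto simp: Basis_vec_def)
  hence "span Basis \<subseteq> span E8" by (metis span_minimal subspace_span)
  thus ?thesis by auto
qed

lemma zspan_diff: "a \<in> zspan B \<Longrightarrow> b \<in> zspan B \<Longrightarrow> a - b \<in> zspan B"
proof -
  assume "a \<in> zspan B" "b \<in> zspan B"
  then obtain c d where a: "a = (\<Sum>x\<in>B. of_int (c x) *\<^sub>R x)" and b: "b = (\<Sum>x\<in>B. of_int (d x) *\<^sub>R x)"
    unfolding zspan_def by auto
  have "a - b = (\<Sum>x\<in>B. of_int (c x - d x) *\<^sub>R x)"
    by (simp add: a b sum_subtractf[symmetric] scaleR_diff_left)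
  thus ?thesis unfolding zspan_def mem_Collect_eq by (intro exI[of _ "\<lambda>x. c x - d x"]) simp
qed

lemma zspan_add: "a \<in> zspan B \<Longrightarrow> b \<in> zspan B \<Longrightarrow> a + b \<in> zspan B"
proof -
  assume "a \<in> zspan B" "b \<in> zspan B"
  then obtain c d where a: "a = (\<Sum>x\<in>B. of_int (c x) *\<^sub>R x)" and b: "b = (\<Sum>x\<in>B. of_int (d x) *\<^sub>R x)"
    unfolding zspan_def by auto
  have "a + b = (\<Sum>x\<in>B. of_int (c x + d x) *\<^sub>R x)"
    by (simp add: a b sum.distrib[symmetric] scaleR_add_left)
  thus ?thesis unfolding zspan_def mem_Collect_eq by (intro exI[of _ "\<lambda>x. c x + d x"]) simp
qed

lemma zspan_smult: "a \<in> zspan B \<Longrightarrow> of_int k *\<^sub>R a \<in> zspan B"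
proof -
  assume "a \<in> zspan B"
  then obtain c where a: "a = (\<Sum>x\<in>B. of_int (c x) *\<^sub>R x)"
    unfolding zspan_def by auto
  have "of_int k *\<^sub>R a = (\<Sum>x\<in>B. of_int (k * c x) *\<^sub>R x)"
    by (simp add: a scaleR_sum_right)
  thus ?thesis unfolding zspan_def mem_Collect_eq by (intro exI[of _ "\<lambda>x. k * c x"]) simp
qed

lemma lattice_min_le:
  assumes "x \<in> L" "x \<noteq> 0"
  shows "lattice_min L \<le> x \<bullet> x"
  unfolding lattice_min_def
  by (rule cInf_lower) (use assms in \<open>auto intro!: bdd_belowI[where m=0]\<close>)

theorem lemma3p3:
  fixes \<Lambda> F :: "'a::euclidean_space set"
  assumes "DIM('a) = 9"
    and "lattice_of_rank \<Lambda> 9"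
    and "well_rounded \<Lambda>"
    and "subspace F" and "dim F = 8"
    and "similar_to_E8 (\<Lambda> \<inter> F)"
    and "lattice_min (\<Lambda> \<inter> F) = lattice_min \<Lambda>"
  shows "\<not> (\<exists>L. lattice L \<and> lattice_min L = lattice_min \<Lambda> \<and> \<Lambda> \<subset> L)"
proof
  assume "\<exists>L. lattice L \<and> lattice_min L = lattice_min \<Lambda> \<and> \<Lambda> \<subset> L"
  then obtain L where "lattice L" and Lmin: "lattice_min L = lattice_min \<Lambda>" and sub: "\<Lambda> \<subset> L" by blast
  obtain B where LB: "\<Lambda> = zspan B" using assms(2) unfolding lattice_of_rank_def by blast
  obtain B' where LB': "L = zspan B'" using \<open>lattice L\<close> unfolding lattice_def lattice_of_rank_def by blast
  define m where "m = lattice_min \<Lambda>"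
  have lowL: "m \<le> x \<bullet> x" if "x \<in> L" "x \<noteq> 0" for x
    using lattice_min_le[OF that] Lmin m_def by simp
  obtain f :: "real^8 \<Rightarrow> 'a" and c where lf: "linear f" and c: "c > 0"
    and nf: "\<And>x. norm (f x) = c * norm x" and fE: "f ` E8 = \<Lambda> \<inter> F"
    using assms(6) unfolding similar_to_E8_def by blast
  have f0: "f x = 0 \<longleftrightarrow> x = 0" for x using nf[of x] c by auto
  have injf: "inj f"
  proof (rule injI)
    fix x y assume "f x = f y"
    hence "f (x - y) = 0" using linear_diff[OF lf] by simp
    thus "x = y" using f0 by simp
  qed
  have ff: "f x \<bullet> f x = c^2 * (x \<bullet> x)" for x
    using nf[of x] by (simp add: power2_norm_eq_inner[symmetric] power_mult_distrib)
  have m_ge: "2 * c^2 \<le> m"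
  proof -
    define h :: "real^8" where "h = (\<chi> i. 1/2)"
    have "0 \<in> D8" unfolding D8_def by auto
    hence hE: "h \<in> E8" unfolding E8_def h_def by force
    have "h \<noteq> 0" unfolding h_def by (metis vec_lambda_beta zero_index zero_neq_numeral divide_eq_0_iff one_neq_zero)
    hence "f h \<noteq> 0" using f0 by simp
    hence ne: "{x \<bullet> x |x. x \<in> \<Lambda> \<inter> F \<and> x \<noteq> 0} \<noteq> {}" using hE fE by blast
    have "2 * c^2 \<le> lattice_min (\<Lambda> \<inter> F)"
      unfolding lattice_min_def
    proof (rule cInf_greatest[OF ne])
      fix y assume "y \<in> {x \<bullet> x |x. x \<in> \<Lambda> \<inter> F \<and> x \<noteq> 0}"
      then obtain x where x: "x \<in> \<Lambda> \<inter> F" "x \<noteq> 0" "y = x \<bullet> x" by auto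
      then obtain e where "e \<in> E8" "x = f e" using fE by (metis imageE)
      hence e: "e \<in> E8" "f e \<noteq> 0" "y = f e \<bullet> f e" using x by auto
      have "e \<noteq> 0" using e f0 by auto
      hence "2 \<le> e \<bullet> e" using E8_min e by auto
      hence "2 * c^2 \<le> (e \<bullet> e) * c^2" by (intro mult_right_mono) auto
      thus "2 * c^2 \<le> y" using e ff[of e] by (simp add: mult.commute)
    qed
    thus ?thesis using assms(7) m_def by simp
  qed
  have mpos: "m > 0" using m_ge c by (smt (verit) zero_less_power)
  obtain u where u: "u \<in> \<Lambda>" "u \<bullet> u = m" "u \<notin> F"
  proof -
    have "\<not> min_vectors \<Lambda> \<subseteq> F"
    proof
      assume "min_vectors \<Lambda> \<subseteq> F"
      hence "span (min_vectors \<Lambda>) \<subseteq> F" using span_minimal assms(4) by blast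
      hence "F = UNIV" using assms(3) unfolding well_rounded_def by auto
      thus False using assms(1,5) dim_UNIV by simp
    qed
    thus ?thesis using that unfolding min_vectors_def m_def by auto
  qed
  have rangeF: "range f \<subseteq> F"
  proof -
    have "range f = f ` span E8" by (simp add: span_E8)
    also have "\<dots> = span (f ` E8)" by (simp add: span_linear_image[OF lf])
    also have "\<dots> \<subseteq> F" using fE span_minimal assms(4) by (metis inf_le2)
    finally show ?thesis .
  qed
  have sub_range: "subspace (range f)"
  proof -
    have "range f = f ` span E8" by (simp add: span_E8)
    also have "\<dots> = span (f ` E8)" by (simp add: span_linear_image[OF lf])
    finally show ?thesis by simp
  qed
  have dimr: "8 \<le> dim (range f)"
  proof -
    have ind: "independent (f ` Basis)"
      using linear_independent_injective_image[OF lf independent_Basis] injf by (auto intro: inj_on_subset)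
    have "card (f ` (Basis :: (real^8) set)) = 8"
      using card_image[OF inj_on_subset[OF injf subset_UNIV]] by simp
    thus ?thesis using independent_card_le_dim[of "f ` Basis" "range f"] ind by auto
  qed
  have spr: "span (range f) = range f" using sub_range by (simp add: span_eq_iff)
  have uns: "u \<notin> span (range f)" using u(3) rangeF spr by (metis subsetD)
  have "dim (insert u (range f)) = dim (range f) + 1" using uns by (simp add: dim_insert)
  moreover have "dim (insert u (range f)) \<le> DIM('a)" by (rule dim_subset_UNIV)
  ultimately have "dim (insert u (range f)) = DIM('a)" using dimr assms(1) by linarith
  hence spanU: "span (insert u (range f)) = UNIV" by (simp add: dim_eq_full)
  obtain v where v: "v \<in> L" "v \<notin> \<Lambda>" using sub by blast
  obtain tt where "v - tt *\<^sub>R u \<in> span (range f)" using spanU span_breakdown_eq by blast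
  hence yv: "v - tt *\<^sub>R u \<in> range f" using spr by simp
  obtain yu wu where yu: "yu \<in> span (range f)" and wu: "\<And>w. w \<in> span (range f) \<Longrightarrow> orthogonal wu w"
    and udec: "u = yu + wu" by (rule orthogonal_subspace_decomp_exists[of "range f" u]) blast
  define kk where "kk = round tt"
  have tk: "\<bar>tt - of_int kk\<bar> \<le> 1/2" using of_int_round_abs_le[of tt] by (simp add: kk_def abs_minus_commute)
  define x where "x = v - of_int kk *\<^sub>R u"
  have uL: "u \<in> L" using u sub by blast
  have xL: "x \<in> L" unfolding x_def LB' using v(1) uL LB' zspan_diff zspan_smult by blast
  define Y where "Y = (tt - of_int kk) *\<^sub>R yu + (v - tt *\<^sub>R u)"
  have Yr: "Y \<in> range f" unfolding Y_def using yu yv sub_range spr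
    by (metis subspace_add subspace_mul)
  have xY: "x = (tt - of_int kk) *\<^sub>R wu + Y"
    unfolding x_def Y_def udec by (simp add: algebra_simps)
  obtain z where z: "Y = f z" using Yr by blast
  obtain e0 where e0: "e0 \<in> E8" "(z - e0) \<bullet> (z - e0) \<le> 1" using E8_cover by blast
  define e where "e = f e0"
  have eL: "e \<in> \<Lambda>" using e0 fE e_def by blast
  have Ye: "(Y - e) \<bullet> (Y - e) \<le> c^2"
  proof -
    have "Y - e = f (z - e0)" using z e_def linear_diff[OF lf] by simp
    hence "(Y - e) \<bullet> (Y - e) = c^2 * ((z - e0) \<bullet> (z - e0))" using ff by simp
    thus ?thesis using e0(2) by (simp add: mult_left_le)
  qed
  have Yes: "Y - e \<in> span (range f)" using Yr e_def sub_range spr by (metis subspace_diff rangeI)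
  have "norm u ^ 2 = norm yu ^ 2 + norm wu ^ 2" unfolding udec
    by (rule norm_add_Pythagorean) (metis wu yu orthogonal_commute)
  hence wum: "norm wu ^ 2 \<le> m" using u(2) by (simp add: power2_norm_eq_inner)
  have "(x - e) \<bullet> (x - e) = norm ((tt - of_int kk) *\<^sub>R wu + (Y - e)) ^ 2"
    by (simp add: xY power2_norm_eq_inner algebra_simps)
  also have "\<dots> = norm ((tt - of_int kk) *\<^sub>R wu) ^ 2 + norm (Y - e) ^ 2"
    by (rule norm_add_Pythagorean) (use wu Yes in \<open>simp add: orthogonal_clauses\<close>)
  also have "\<dots> = (tt - of_int kk)^2 * norm wu ^ 2 + (Y - e) \<bullet> (Y - e)"
    by (simp add: power_mult_distrib power2_norm_eq_inner)
  also have "\<dots> \<le> (1/4) * m + m / 2"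
  proof (intro add_mono mult_mono)
    have "\<bar>tt - of_int kk\<bar>^2 \<le> (1/2)^2" using tk by (intro power_mono) auto
    thus "(tt - of_int kk)^2 \<le> 1/4" by (simp add: power2_eq_square)
    show "(Y - e) \<bullet> (Y - e) \<le> m / 2" using Ye m_ge by simp
  qed (use wum in auto)
  also have "\<dots> < m" using mpos by simp
  finally have lt: "(x - e) \<bullet> (x - e) < m" .
  have "x - e \<in> L" using xL eL sub LB' zspan_diff by blast
  hence "x - e = 0" using lowL lt by force
  hence "v = e + of_int kk *\<^sub>R u" unfolding x_def by (simp add: algebra_simps)
  hence "v \<in> \<Lambda>" unfolding LB using eL u(1) LB zspan_add zspan_smult by metis
  thus False using v by simp
qed

end
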